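(* Let $G$ be a finite, simple, connected graph and let $e \in E(G)$ be an edge that is not a cut edge of $G$. Then $$\chi_{dd}(G)-1 \leq \chi_{dd}(G-e) \leq \chi_{dd}(G)+2,$$ where $G-e$ is the graph obtained from $G$ by removing the edge $e$ (keeping all vertices).
   Context: All graphs are finite, undirected and simple. For a vertex $w$, $N(w)$ is its open neighborhood and $N[w]=N(w)\cup\{w\}$ its closed neighborhood. A vertex $w$ dominates a set $S$ of vertices if $S \subseteq N[w]$. A domination coloring of a graph $H$ is a proper vertex coloring of $H$ (adjacent vertices receive different colors; a color class is the set of all vertices receiving a given color) such that every vertex of $H$ dominates at least one color class (possibly its own class), and every color class is dominated by at least one vertex of $H$. The domination chromatic number $\chi_{dd}(H)$ is the minimum number of color classes in a domination coloring of $H$. *)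

theory Defs
  imports Main
begin

definition simple_graph :: "'a set \<Rightarrow> 'a set set \<Rightarrow> bool" where
  "simple_graph V E \<longleftrightarrow> finite V \<and> (\<forall>e\<in>E. e \<subseteq> V \<and> card e = 2)"

definition closed_nbhd :: "'a set set \<Rightarrow> 'a \<Rightarrow> 'a set" where
  "closed_nbhd E w = insert w {u. {u, w} \<in> E}"

definition reachable :: "'a set set \<Rightarrow> 'a \<Rightarrow> 'a \<Rightarrow> bool" where
  "reachable E u v \<longleftrightarrow> (\<lambda>x y. {x, y} \<in> E)\<^sup>*\<^sup>* u v"

definition connected_graph :: "'a set \<Rightarrow> 'a set set \<Rightarrow> bool" where
  "connected_graph V E \<longleftrightarrow> V \<noteq> {} \<and> (\<forall>u\<in>V. \<forall>v\<in>V. reachable E u v)"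

text \<open>A cut edge (bridge): an edge uv whose removal disconnects u from v
  (equivalently, whose removal increases the number of components).\<close>
definition cut_edge :: "'a set set \<Rightarrow> 'a set \<Rightarrow> bool" where
  "cut_edge E e \<longleftrightarrow> e \<in> E \<and> (\<exists>u v. e = {u, v} \<and> \<not> reachable (E - {e}) u v)"

definition color_class :: "'a set \<Rightarrow> ('a \<Rightarrow> nat) \<Rightarrow> nat \<Rightarrow> 'a set" where
  "color_class V c i = {v \<in> V. c v = i}"

definition dom_coloring :: "'a set \<Rightarrow> 'a set set \<Rightarrow> ('a \<Rightarrow> nat) \<Rightarrow> bool" where
  "dom_coloring V E c \<longleftrightarrow>
     (\<forall>u\<in>V. \<forall>v\<in>V. {u, v} \<in> E \<longrightarrow> c u \<noteq> c v) \<and>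
     (\<forall>w\<in>V. \<exists>i\<in>c ` V. color_class V c i \<subseteq> closed_nbhd E w) \<and>
     (\<forall>i\<in>c ` V. \<exists>w\<in>V. color_class V c i \<subseteq> closed_nbhd E w)"

definition chi_dd :: "'a set \<Rightarrow> 'a set set \<Rightarrow> nat" where
  "chi_dd V E = (LEAST k. \<exists>c. dom_coloring V E c \<and> card (c ` V) = k)"

end

theory Submission
  imports Defs
begin

lemma recolor:
  assumes fin: "finite V" and SV: "S \<subseteq> V"
    and dc: "dom_coloring V E1 c"
    and noloop: "\<And>u. {u} \<notin> E2"
    and P: "\<And>u v. u \<in> V - S \<Longrightarrow> v \<in> V - S \<Longrightarrow> {u, v} \<in> E2 \<Longrightarrow> {u, v} \<in> E1"
    and N1: "\<And>w. w \<in> V \<Longrightarrow> closed_nbhd E1 w - S \<subseteq> closed_nbhd E2 w"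
    and N2: "\<And>w. w \<in> V - S \<Longrightarrow> closed_nbhd E1 w \<subseteq> closed_nbhd E2 w"
  shows "\<exists>c'. dom_coloring V E2 c' \<and> card (c' ` V) \<le> card (c ` V) + card S"
proof -
  have finS: "finite S" using fin SV finite_subset by blast
  obtain g :: "'a \<Rightarrow> nat" and n where g: "g ` S = {i. i < n}" "inj_on g S"
    using finite_imp_inj_to_nat_seg[OF finS] by blast
  define m where "m = Suc (Max (insert 0 (c ` V)))"
  have mbig: "\<And>v. v \<in> V \<Longrightarrow> c v < m"
    unfolding m_def using fin by (simp add: le_imp_less_Suc)
  define f where "f v = m + g v" for v
  have finj: "inj_on f S" using g(2) unfolding f_def inj_on_def by auto
  have ffresh: "f s \<noteq> c v" if "v \<in> V" for s v
  proof -
    have "c v < m" using mbig[OF that] .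
    then show ?thesis unfolding f_def by simp
  qed
  define c' where "c' v = (if v \<in> S then f v else c v)" for v
  have prop1: "\<forall>u\<in>V. \<forall>v\<in>V. {u, v} \<in> E1 \<longrightarrow> c u \<noteq> c v"
   and dom1: "\<forall>w\<in>V. \<exists>i\<in>c ` V. color_class V c i \<subseteq> closed_nbhd E1 w"
   and cls1: "\<forall>i\<in>c ` V. \<exists>w\<in>V. color_class V c i \<subseteq> closed_nbhd E1 w"
    using dc unfolding dom_coloring_def by auto
  have classS: "color_class V c' (f s) = {s}" if "s \<in> S" for s
  proof (rule set_eqI)
    fix v show "v \<in> color_class V c' (f s) \<longleftrightarrow> v \<in> {s}"
    proof (cases "v \<in> S")
      case True
      then show ?thesis using that SV inj_on_eq_iff[OF finj True that]
        unfolding color_class_def c'_def by auto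
    next
      case False
      then show ?thesis using that ffresh[of v s] unfolding color_class_def c'_def by auto
    qed
  qed
  have classO: "color_class V c' (c v) = color_class V c (c v) - S" if "v \<in> V" for v
  proof (rule set_eqI)
    fix u show "u \<in> color_class V c' (c v) \<longleftrightarrow> u \<in> color_class V c (c v) - S"
      using ffresh[OF that, of u] unfolding color_class_def c'_def by auto
  qed
  have selfn: "\<And>w E. w \<in> closed_nbhd E w" unfolding closed_nbhd_def by auto
  have img: "c' ` V \<subseteq> c ` V \<union> f ` S" unfolding c'_def by auto
  have "dom_coloring V E2 c'"
    unfolding dom_coloring_def
  proof (intro conjI ballI impI)
    fix u v assume uv: "u \<in> V" "v \<in> V" "{u, v} \<in> E2"
    have "u \<noteq> v" using uv(3) noloop by auto
    show "c' u \<noteq> c' v"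
    proof (cases "u \<in> S")
      case True
      then show ?thesis
      proof (cases "v \<in> S")
        case True
        then show ?thesis using \<open>u \<in> S\<close> \<open>u \<noteq> v\<close> finj unfolding c'_def inj_on_def by auto
      next
        case False
        then show ?thesis using \<open>u \<in> S\<close> ffresh uv unfolding c'_def by auto
      qed
    next
      case False
      then show ?thesis
      proof (cases "v \<in> S")
        case True
        then show ?thesis using \<open>u \<notin> S\<close> ffresh uv unfolding c'_def by metis
      next
        case False
        then show ?thesis using \<open>u \<notin> S\<close> P[of u v] uv prop1 unfolding c'_def by auto
      qed
    qed
  next
    fix w assume w: "w \<in> V"
    show "\<exists>i\<in>c' ` V. color_class V c' i \<subseteq> closed_nbhd E2 w"
    proof (cases "w \<in> S")
      case True
      then have "f w \<in> c' ` V" using w unfolding c'_def by force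
      then show ?thesis using classS[OF True] selfn[of w E2] by (intro bexI[of _ "f w"]) simp_all
    next
      case False
      obtain i where i: "i \<in> c ` V" "color_class V c i \<subseteq> closed_nbhd E1 w"
        using dom1 w by blast
      have sub: "color_class V c i \<subseteq> closed_nbhd E2 w" using i(2) N2[of w] w False by auto
      show ?thesis
      proof (cases "color_class V c i - S = {}")
        case True
        obtain v where v: "v \<in> V" "c v = i" using i(1) by auto
        then have "v \<in> S" using True unfolding color_class_def by auto
        have "f v \<in> c' ` V" using v \<open>v \<in> S\<close> unfolding c'_def by force
        moreover have "v \<in> closed_nbhd E2 w" using sub v unfolding color_class_def by auto
        ultimately show ?thesis using classS[OF \<open>v \<in> S\<close>] by (intro bexI[of _ "f v"]) simp_all
      next
        case False
        then obtain v where v: "v \<in> V" "c v = i" "v \<notin> S" unfolding color_class_def by auto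
        have "c v \<in> c' ` V" using v unfolding c'_def by force
        then show ?thesis using classO[OF v(1)] v sub by (intro bexI[of _ "c v"]) auto
      qed
    qed
  next
    fix i assume "i \<in> c' ` V"
    then obtain v where v: "v \<in> V" "i = c' v" by auto
    show "\<exists>w\<in>V. color_class V c' i \<subseteq> closed_nbhd E2 w"
    proof (cases "v \<in> S")
      case True
      then have "color_class V c' i = {v}" using v classS[OF True] unfolding c'_def by simp
      then show ?thesis using v selfn[of v E2] by (intro bexI[of _ v]) simp_all
    next
      case False
      obtain w where w: "w \<in> V" "color_class V c (c v) \<subseteq> closed_nbhd E1 w"
        using cls1 v by blast
      have "color_class V c' i = color_class V c (c v) - S" using classO[OF v(1)] v False
        unfolding c'_def by auto
      then show ?thesis using w N1[OF w(1)] by blast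
    qed
  qed
  moreover have "card (c' ` V) \<le> card (c ` V) + card S"
  proof -
    have "card (c' ` V) \<le> card (c ` V \<union> f ` S)"
      using img fin finS by (intro card_mono) auto
    also have "\<dots> \<le> card (c ` V) + card (f ` S)" by (rule card_Un_le)
    also have "\<dots> \<le> card (c ` V) + card S" using card_image_le[OF finS] by simp
    finally show ?thesis .
  qed
  ultimately show ?thesis by blast
qed

lemma exists_dc:
  assumes fin: "finite V" and noloop: "\<And>u. {u} \<notin> E"
  shows "\<exists>c. dom_coloring V E c"
proof -
  obtain g :: "'a \<Rightarrow> nat" and n where g: "g ` V = {i. i < n}" "inj_on g V"
    using finite_imp_inj_to_nat_seg[OF fin] by blast
  have cl: "color_class V g (g v) = {v}" if "v \<in> V" for v
    using g(2) that unfolding color_class_def inj_on_def by auto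
  have selfn: "\<And>w. w \<in> closed_nbhd E w" unfolding closed_nbhd_def by auto
  show ?thesis unfolding dom_coloring_def
  proof (intro exI conjI ballI impI)
    fix u v assume "u \<in> V" "v \<in> V" "{u, v} \<in> E"
    then show "g u \<noteq> g v" using g(2) noloop unfolding inj_on_def by (metis insert_absorb2)
  next
    fix w assume w: "w \<in> V" then show "\<exists>i\<in>g ` V. color_class V g i \<subseteq> closed_nbhd E w"
      using cl[OF w] selfn[of w] by (intro bexI[of _ "g w"]) auto
  next
    fix i assume "i \<in> g ` V"
    then obtain v where v: "v \<in> V" "i = g v" by blast
    then show "\<exists>w\<in>V. color_class V g i \<subseteq> closed_nbhd E w"
      using cl[OF v(1)] selfn[of v] by (intro bexI[of _ v]) auto
  qed
qed

lemma chi_step: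
  assumes fin: "finite V" and SV: "S \<subseteq> V"
    and noloop1: "\<And>u. {u} \<notin> E1"
    and noloop: "\<And>u. {u} \<notin> E2"
    and P: "\<And>u v. u \<in> V - S \<Longrightarrow> v \<in> V - S \<Longrightarrow> {u, v} \<in> E2 \<Longrightarrow> {u, v} \<in> E1"
    and N1: "\<And>w. w \<in> V \<Longrightarrow> closed_nbhd E1 w - S \<subseteq> closed_nbhd E2 w"
    and N2: "\<And>w. w \<in> V - S \<Longrightarrow> closed_nbhd E1 w \<subseteq> closed_nbhd E2 w"
  shows "chi_dd V E2 \<le> chi_dd V E1 + card S"
proof -
  obtain c0 where "dom_coloring V E1 c0" using exists_dc[OF fin noloop1] by blast
  then have ex: "\<exists>k c. dom_coloring V E1 c \<and> card (c ` V) = k" by blast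
  then obtain c where c: "dom_coloring V E1 c" "card (c ` V) = chi_dd V E1"
    unfolding chi_dd_def using LeastI_ex[of "\<lambda>k. \<exists>c. dom_coloring V E1 c \<and> card (c ` V) = k"]
    by blast
  obtain c' where c': "dom_coloring V E2 c'" "card (c' ` V) \<le> card (c ` V) + card S"
    using recolor[OF fin SV c(1) noloop P N1 N2] by blast
  have "chi_dd V E2 \<le> card (c' ` V)" unfolding chi_dd_def
    using c'(1) by (intro Least_le) blast
  then show ?thesis using c'(2) c(2) by simp
qed

theorem theorem2:
  fixes V :: "'a set" and E :: "'a set set" and e :: "'a set"
  assumes "simple_graph V E"
    and "connected_graph V E"
    and "e \<in> E"
    and "\<not> cut_edge E e"
  shows "chi_dd V E \<le> chi_dd V (E - {e}) + 1 \<and> chi_dd V (E - {e}) \<le> chi_dd V E + 2"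
proof -
  have fin: "finite V" and ed: "\<And>f. f \<in> E \<Longrightarrow> f \<subseteq> V \<and> card f = 2"
    using assms(1) unfolding simple_graph_def by auto
  obtain x y where xy: "e = {x, y}" "x \<noteq> y" using ed[OF assms(3)] card_2_iff by metis
  have xyV: "x \<in> V" "y \<in> V" using ed[OF assms(3)] xy by auto
  have noloop: "\<And>u. {u} \<notin> E" using ed by fastforce
  have noloop': "\<And>u. {u} \<notin> E - {e}" using noloop by blast
  have A: "chi_dd V E \<le> chi_dd V (E - {e}) + card {x}"
  proof (rule chi_step[OF fin _ noloop' noloop])
    show "{x} \<subseteq> V" using xyV by auto
  next
    fix u v assume "u \<in> V - {x}" "v \<in> V - {x}" "{u, v} \<in> E"
    then show "{u, v} \<in> E - {e}" using xy by (auto simp: doubleton_eq_iff)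
  next
    fix w show "closed_nbhd (E - {e}) w - {x} \<subseteq> closed_nbhd E w"
      unfolding closed_nbhd_def by auto
  next
    fix w show "closed_nbhd (E - {e}) w \<subseteq> closed_nbhd E w"
      unfolding closed_nbhd_def by auto
  qed
  have B: "chi_dd V (E - {e}) \<le> chi_dd V E + card {x, y}"
  proof (rule chi_step[OF fin _ noloop noloop'])
    show "{x, y} \<subseteq> V" using xyV by auto
  next
    fix u v assume "u \<in> V - {x, y}" "v \<in> V - {x, y}" "{u, v} \<in> E - {e}"
    then show "{u, v} \<in> E" by auto
  next
    fix w show "closed_nbhd E w - {x, y} \<subseteq> closed_nbhd (E - {e}) w"
      unfolding closed_nbhd_def using xy by (auto simp: doubleton_eq_iff)
  next
    fix w assume "w \<in> V - {x, y}"
    then show "closed_nbhd E w \<subseteq> closed_nbhd (E - {e}) w"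
      unfolding closed_nbhd_def using xy by (auto simp: doubleton_eq_iff)
  qed
  show ?thesis using A B xy(2) by simp
qed

end
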